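(* Consider the model below with $\min\{M,M_f,N\}<1$ and $\epsilon_2\ge0$, and fix all parameters other than $\epsilon_1$. (i) There exists $\bar{\epsilon}_{BR}\in[-\infty,\infty)$, depending only on the model parameters, such that for every $\epsilon_1\in\mathbb{R}$ a bounded-rationality equilibrium (BRE) exists if and only if $\epsilon_1\ge\bar{\epsilon}_{BR}$. (ii) If $(M-1)(1-M_f\beta)+\lambda\sigma N<0$, then $\bar{\epsilon}_{BR}=-\infty$, i.e. a BRE exists for every $\epsilon_1\in\mathbb{R}$.
   Context: Parameters: $0<\beta<1$, $\sigma,\lambda,\mu>0$, $\psi>1$, $p,q\in(0,1]$, $M,M_f,N\in(0,1]$. The shock $\epsilon_t$ is a two-state Markov chain on $\{\epsilon_1,\epsilon_2\}$ with $\Pr(\epsilon_{t+1}=\epsilon_1\mid\epsilon_t=\epsilon_1)=p$, $\Pr(\epsilon_{t+1}=\epsilon_2\mid\epsilon_t=\epsilon_2)=q$. Model: $x_t=M E_t x_{t+1}-\sigma(i_t-N E_t\pi_{t+1})+\epsilon_t$, $\pi_t=\lambda x_t+M_f\beta E_t\pi_{t+1}$, $i_t=\max\{\psi\pi_t,-\mu\}$. A BRE is a pair $Y_j=(x_j,\pi_j)\in\mathbb{R}^2$, $j=1,2$, such that for $j=1,2$, with $i_j=\max\{\psi\pi_j,-\mu\}$: $x_j=Mx^e_j-\sigma(i_j-N\pi^e_j)+\epsilon_j$, $\pi_j=\lambda x_j+M_f\beta\pi^e_j$, where $(x^e_1,\pi^e_1)=pY_1+(1-p)Y_2$, $(x^e_2,\pi^e_2)=(1-q)Y_1+qY_2$.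 *)

theory Defs
  imports Complex_Main "HOL-Library.Extended_Real"
begin

definition irate :: "real \<Rightarrow> real \<Rightarrow> real \<Rightarrow> real" where
  "irate psi mu infl = max (psi * infl) (- mu)"

definition is_BRE ::
  "real \<Rightarrow> real \<Rightarrow> real \<Rightarrow> real \<Rightarrow> real \<Rightarrow> real \<Rightarrow> real \<Rightarrow> real \<Rightarrow> real \<Rightarrow> real
   \<Rightarrow> real \<Rightarrow> real \<Rightarrow> real \<Rightarrow> real \<Rightarrow> real \<Rightarrow> real \<Rightarrow> bool" where
  "is_BRE beta sigma lambda mu psi p q M Mf N eps1 eps2 x1 pi1 x2 pi2 \<longleftrightarrow>
     (let xe1 = p * x1 + (1 - p) * x2; pie1 = p * pi1 + (1 - p) * pi2;
          xe2 = (1 - q) * x1 + q * x2; pie2 = (1 - q) * pi1 + q * pi2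
      in x1 = M * xe1 - sigma * (irate psi mu pi1 - N * pie1) + eps1
       \<and> pi1 = lambda * x1 + Mf * beta * pie1
       \<and> x2 = M * xe2 - sigma * (irate psi mu pi2 - N * pie2) + eps2
       \<and> pi2 = lambda * x2 + Mf * beta * pie2)"

definition BRE_exists ::
  "real \<Rightarrow> real \<Rightarrow> real \<Rightarrow> real \<Rightarrow> real \<Rightarrow> real \<Rightarrow> real \<Rightarrow> real \<Rightarrow> real \<Rightarrow> real
   \<Rightarrow> real \<Rightarrow> real \<Rightarrow> bool" where
  "BRE_exists beta sigma lambda mu psi p q M Mf N eps1 eps2 \<longleftrightarrow>
     (\<exists>x1 pi1 x2 pi2. is_BRE beta sigma lambda mu psi p q M Mf N eps1 eps2 x1 pi1 x2 pi2)"

end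

theory Submission
  imports Defs "HOL-Analysis.Analysis"
begin

definition Tset :: "real \<Rightarrow> real \<Rightarrow> real \<Rightarrow> real \<Rightarrow> real \<Rightarrow> real \<Rightarrow> real set" where
  "Tset a11 a12 a21 a22 k Y = {X. \<exists>U V. a11* U + a12* V + k* max U 0 = X \<and> a21* U + a22* V + k* max V 0 = Y}"

definition linf :: "real \<Rightarrow> real \<Rightarrow> real \<Rightarrow> real \<Rightarrow> real \<times> real \<Rightarrow> real \<times> real" where
  "linf b1 b2 c1 c2 z = (fst z * b1 + snd z * c1, fst z * b2 + snd z * c2)"

lemma quad_hull: "{z::real\<times>real. 0 \<le> fst z \<and> 0 \<le> snd z} = convex_cone hull {(1,0),(0,1)}"
proof
  show "{z::real\<times>real. 0 \<le> fst z \<and> 0 \<le> snd z} \<subseteq> convex_cone hull {(1,0),(0,1)}"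
  proof
    fix z :: "real \<times> real" assume z: "z \<in> {z. 0 \<le> fst z \<and> 0 \<le> snd z}"
    have a: "(1::real,0::real) \<in> convex_cone hull {(1,0),(0,1)}" by (simp add: hull_inc)
    have b: "(0::real,1::real) \<in> convex_cone hull {(1,0),(0,1)}" by (simp add: hull_inc)
    have "fst z *\<^sub>R (1::real,0::real) + snd z *\<^sub>R (0,1) \<in> convex_cone hull {(1,0),(0,1)}"
      using z by (intro convex_cone_hull_add convex_cone_hull_mul a b) auto
    moreover have "fst z *\<^sub>R (1::real,0::real) + snd z *\<^sub>R (0,1) = z" by (cases z) simp
    ultimately show "z \<in> convex_cone hull {(1,0),(0,1)}" by simp
  qed
  show "convex_cone hull {(1,0),(0,1)} \<subseteq> {z::real\<times>real. 0 \<le> fst z \<and> 0 \<le> snd z}"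
  proof (rule hull_minimal)
    show "{(1::real,0::real),(0,1)} \<subseteq> {z::real\<times>real. 0 \<le> fst z \<and> 0 \<le> snd z}" by auto
    show "convex_cone {z::real\<times>real. 0 \<le> fst z \<and> 0 \<le> snd z}"
      unfolding convex_cone_def conic_def convex_def
      by (auto intro!: add_nonneg_nonneg mult_nonneg_nonneg)
  qed
qed

lemma closed_linf: "closed (linf b1 b2 c1 c2 ` {z. 0 \<le> fst z \<and> 0 \<le> snd z})"
proof -
  have lin: "linear (linf b1 b2 c1 c2)"
    unfolding linear_iff linf_def by (auto simp: algebra_simps)
  show ?thesis
    unfolding quad_hull convex_cone_hull_linear_image[OF lin, symmetric]
    by (rule closed_convex_cone_hull) simp
qed

lemma Tset_closed:
  fixes a11 a12 a21 a22 k Y :: real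
  assumes k: "k > 0"
  shows "closed (Tset a11 a12 a21 a22 k Y)"
proof -
  let ?Q = "{z::real\<times>real. 0 \<le> fst z \<and> 0 \<le> snd z}"
  let ?I = "linf (a11+k) a21 a12 (a22+k) ` ?Q \<union> linf (-a11) (-a21) a12 (a22+k) ` ?Q
          \<union> linf (a11+k) a21 (-a12) (-a22) ` ?Q \<union> linf (-a11) (-a21) (-a12) (-a22) ` ?Q"
  have cI: "closed ?I" by (intro closed_Un closed_linf)
  have eq: "Tset a11 a12 a21 a22 k Y = (\<lambda>X. (X, Y)) -` ?I"
  proof (rule set_eqI, rule iffI)
    fix X assume "X \<in> Tset a11 a12 a21 a22 k Y"
    then obtain U V where e1: "a11* U + a12* V + k* max U 0 = X" and e2: "a21* U + a22* V + k* max V 0 = Y"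
      unfolding Tset_def by blast
    show "X \<in> (\<lambda>X. (X, Y)) -` ?I"
    proof (cases "0 \<le> U")
      case U: True
      show ?thesis
      proof (cases "0 \<le> V")
        case True
        have "(X,Y) = linf (a11+k) a21 a12 (a22+k) (U,V)"
          using U True e1 e2 by (auto simp: linf_def algebra_simps)
        then show ?thesis using U True by (auto simp del: linf_def)
      next
        case False
        have "(X,Y) = linf (a11+k) a21 (-a12) (-a22) (U,-V)"
          using U False e1 e2 by (auto simp: linf_def algebra_simps)
        then show ?thesis using U False by (auto simp del: linf_def)
      qed
    next
      case U: False
      show ?thesis
      proof (cases "0 \<le> V")
        case True
        have "(X,Y) = linf (-a11) (-a21) a12 (a22+k) (-U,V)"
          using U True e1 e2 by (auto simp: linf_def algebra_simps)
        then show ?thesis using U True by (auto simp del: linf_def)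
      next
        case False
        have "(X,Y) = linf (-a11) (-a21) (-a12) (-a22) (-U,-V)"
          using U False e1 e2 by (auto simp: linf_def algebra_simps)
        then show ?thesis using U False by (auto simp del: linf_def)
      qed
    qed
  next
    fix X assume "X \<in> (\<lambda>X. (X, Y)) -` ?I"
    then have "(X,Y) \<in> ?I" by simp
    then show "X \<in> Tset a11 a12 a21 a22 k Y"
    proof (elim UnE imageE)
      fix z assume z: "z \<in> ?Q" "(X,Y) = linf (a11+k) a21 a12 (a22+k) z"
      then show ?thesis unfolding Tset_def
        by (intro CollectI exI[of _ "fst z"] exI[of _ "snd z"]) (auto simp: linf_def algebra_simps)
    next
      fix z assume z: "z \<in> ?Q" "(X,Y) = linf (-a11) (-a21) a12 (a22+k) z"
      then show ?thesis unfolding Tset_def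
        by (intro CollectI exI[of _ "- fst z"] exI[of _ "snd z"]) (auto simp: linf_def algebra_simps)
    next
      fix z assume z: "z \<in> ?Q" "(X,Y) = linf (a11+k) a21 (-a12) (-a22) z"
      then show ?thesis unfolding Tset_def
        by (intro CollectI exI[of _ "fst z"] exI[of _ "- snd z"]) (auto simp: linf_def algebra_simps)
    next
      fix z assume z: "z \<in> ?Q" "(X,Y) = linf (-a11) (-a21) (-a12) (-a22) z"
      then show ?thesis unfolding Tset_def
        by (intro CollectI exI[of _ "- fst z"] exI[of _ "- snd z"]) (auto simp: linf_def algebra_simps)
    qed
  qed
  show ?thesis unfolding eq
    by (rule continuous_closed_vimage[OF cI]) (intro continuous_intros)
qed


lemma Tset_nonneg:
  fixes a11 a12 a21 a22 k Y X :: real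
  assumes "a12 \<le> 0" "a21 \<le> 0" "a11 + a12 + k > 0" "a21 + a22 + k > 0" "Y \<ge> 0" "X \<ge> 0"
  shows "X \<in> Tset a11 a12 a21 a22 k Y"
proof -
  define d where "d = (a11+k)* (a22+k) - a12* a21"
  have p1: "a11 + k > 0" "a22 + k > 0" using assms by linarith+
  have "(a11+k)* (a22+k) \<ge> (-a12)* (a22+k)" using assms p1 by (intro mult_right_mono) auto
  moreover have "(-a12)* (a22+k) \<ge> (-a12)* (-a21)" using assms by (intro mult_left_mono) auto
  moreover have "(a11+k)* (a22+k) > (-a12)* (a22+k)" using assms p1 by (intro mult_strict_right_mono) auto
  ultimately have d: "d > 0" unfolding d_def by simp
  define U where "U = ((a22+k)* X - a12* Y)/d"
  define V where "V = (-a21* X + (a11+k)* Y)/d"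
  have "a12* Y \<le> 0" "(a22+k)* X \<ge> 0" using assms p1 by (auto simp: mult_nonpos_nonneg)
  then have U: "U \<ge> 0" unfolding U_def using d by (intro divide_nonneg_pos) auto
  have "-a21* X \<ge> 0" "(a11+k)* Y \<ge> 0" using assms p1 by (auto simp: mult_nonpos_nonneg)
  then have V: "V \<ge> 0" unfolding V_def using d by (intro divide_nonneg_pos) auto
  have Ud: "U* d = (a22+k)* X - a12* Y" unfolding U_def using d by simp
  have Vd: "V* d = -a21* X + (a11+k)* Y" unfolding V_def using d by simp
  have "((a11+k)* U + a12* V)* d = X* d"
    by (simp only: distrib_right mult.assoc Ud Vd) (simp add: d_def algebra_simps)
  then have "(a11+k)* U + a12* V = X" using d by simp
  then have "a11* U + a12* V + k* max U 0 = X" using U by (simp add: algebra_simps)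
  moreover have "(a21* U + (a22+k)* V)* d = Y* d"
    by (simp only: distrib_right mult.assoc Ud Vd) (simp add: d_def algebra_simps)
  then have "a21* U + (a22+k)* V = Y" using d by simp
  then have "a21* U + a22* V + k* max V 0 = Y" using V by (simp add: algebra_simps)
  ultimately show ?thesis unfolding Tset_def by blast
qed


lemma Tset_up:
  fixes a11 a12 a21 a22 k Y X0 X1 :: real
  assumes a: "a12 \<le> 0" "a21 \<le> 0" "a11 + a12 + k > 0" "a21 + a22 + k > 0" "Y \<ge> 0" "k > 0"
    and X0: "X0 \<in> Tset a11 a12 a21 a22 k Y" and le: "X0 \<le> X1"
  shows "X1 \<in> Tset a11 a12 a21 a22 k Y"
proof (cases "X1 \<ge> 0")
  case True then show ?thesis using Tset_nonneg[OF a(1-5)] by blast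
next
  case neg: False
  obtain U0 V0 where e1: "a11* U0 + a12* V0 + k* max U0 0 = X0" and e2: "a21* U0 + a22* V0 + k* max V0 0 = Y"
    using X0 unfolding Tset_def by blast
  show ?thesis
  proof (cases "a21 = 0")
    case z: True
    define w where "w = a11* U0 + k* max U0 0 + (X1 - X0)"
    obtain U1 where U1: "a11* U1 + k* max U1 0 = w"
    proof (cases "w \<ge> 0")
      case True
      have p: "a11 + k > 0" using a by linarith
      then have "w/(a11+k) \<ge> 0" using True by simp
      then have "a11* (w/(a11+k)) + k* max (w/(a11+k)) 0 = (a11+k)* (w/(a11+k))" by (simp only: max_absorb1 distrib_right)
      also have "\<dots> = w" using p by simp
      finally have "a11* (w/(a11+k)) + k* max (w/(a11+k)) 0 = w" .
      then show ?thesis by (rule that)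
    next
      case False
      have "a11* U0 + k* max U0 0 < 0" using False le unfolding w_def by linarith
      note h = this
      have p: "a11 + k > 0" using a by linarith
      have u0a: "U0 < 0"
      proof (rule ccontr)
        assume "\<not> U0 < 0"
        then have "a11* U0 + k* max U0 0 = (a11+k)* U0" by (simp add: algebra_simps)
        moreover have "(a11+k)* U0 \<ge> 0" using p \<open>\<not> U0 < 0\<close> by simp
        ultimately show False using h by linarith
      qed
      then have "a11* U0 < 0" using h by simp
      then have "a11 > 0" using u0a by (simp add: mult_less_0_iff)
      note u0 = u0a this
      then have "w/a11 < 0" using False by (simp add: divide_neg_pos)
      then have "a11* (w/a11) + k* max (w/a11) 0 = w" using u0 by simp
      then show ?thesis by (rule that)
    qed
    have "a11* U1 + a12* V0 + k* max U1 0 = X1" using U1 e1 unfolding w_def by linarith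
    moreover have "a21* U1 + a22* V0 + k* max V0 0 = Y" using e2 z by simp
    ultimately show ?thesis unfolding Tset_def by blast
  next
    case nz: False
    define Uf where "Uf V = (Y - a22* V - k* max V 0)/a21" for V
    define g where "g V = a11* Uf V + a12* V + k* max (Uf V) 0" for V
    have H2: "a21* Uf V + a22* V + k* max V 0 = Y" for V unfolding Uf_def using nz by (simp add: field_simps)
    have Uf: "U = Uf V" if "a21* U + a22* V + k* max V 0 = Y" for U V
      unfolding Uf_def using nz that by (simp add: field_simps)
    have g0: "g V0 = X0" unfolding g_def using Uf[OF e2] e1 by simp
    obtain Us Vs where s1: "a11* Us + a12* Vs + k* max Us 0 = 0" and s2: "a21* Us + a22* Vs + k* max Vs 0 = Y"
      using Tset_nonneg[OF a(1-5), of 0] unfolding Tset_def by auto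
    have gs: "g Vs = 0" unfolding g_def using Uf[OF s2] s1 by simp
    have cont: "continuous_on A g" for A unfolding g_def Uf_def using nz by (intro continuous_intros) auto
    have "\<exists>V. g V = X1"
    proof (cases "V0 \<le> Vs")
      case True
      then show ?thesis using IVT'[of g V0 X1 Vs, OF _ _ True cont] g0 gs le neg by auto
    next
      case False
      then show ?thesis using IVT2'[of g V0 X1 Vs, OF _ _ _ cont] g0 gs le neg by auto
    qed
    then obtain V where "g V = X1" by blast
    then show ?thesis unfolding Tset_def g_def using H2 by blast
  qed
qed


lemma Tset_all:
  fixes a11 a12 a21 a22 k Y X1 :: real
  assumes a: "a12 \<le> 0" "a21 \<le> 0" "a11 + a12 + k > 0" "a21 + a22 + k > 0" "Y \<ge> 0" "k > 0"
    and b: "a11 + a12 > 0" "a21 + a22 > 0"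
  shows "X1 \<in> Tset a11 a12 a21 a22 k Y"
proof -
  have p: "a11 > 0" "a22 > 0" using a b by linarith+
  have "\<exists>X0. X0 \<le> X1 \<and> X0 \<in> Tset a11 a12 a21 a22 k Y"
  proof (cases "a21 = 0")
    case z: True
    define V where "V = Y/(a22+k)"
    have V: "V \<ge> 0" unfolding V_def using a p by simp
    define X0 where "X0 = min X1 (a12* V)"
    define U where "U = (X0 - a12* V)/a11"
    have U: "U \<le> 0" unfolding U_def X0_def using p by (simp add: divide_nonpos_pos)
    have "a11* U + a12* V + k* max U 0 = X0" using U p unfolding U_def by simp
    moreover have "a21* U + a22* V + k* max V 0 = (a22+k)* V" using V z by (simp add: algebra_simps)
    moreover have "(a22+k)* V = Y" unfolding V_def using p a by simp
    ultimately have "X0 \<in> Tset a11 a12 a21 a22 k Y" unfolding Tset_def by blast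
    then show ?thesis unfolding X0_def by (intro exI[of _ X0]) (simp add: X0_def)
  next
    case nz: False
    then have a21: "a21 < 0" using a by simp
    define d where "d = a11* a22 - a12* a21"
    have "a11* a22 \<ge> (-a12)* a22" using a b p by (intro mult_right_mono) auto
    moreover have "(-a12)* a22 \<ge> (-a12)* (-a21)" using a b by (intro mult_left_mono) auto
    moreover have "a11* a22 > (-a12)* a22" using a b p by (intro mult_strict_right_mono) auto
    ultimately have d: "d > 0" unfolding d_def by simp
    define X0 where "X0 = min X1 (min (a12* Y/a22) (a11* Y/a21))"
    define U where "U = (a22* X0 - a12* Y)/d"
    define V where "V = (-a21* X0 + a11* Y)/d"
    have "X0 \<le> a12* Y/a22" unfolding X0_def by simp
    then have "a22* X0 \<le> a12* Y" using p by (simp add: field_simps)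
    then have U: "U \<le> 0" unfolding U_def using d by (simp add: divide_nonpos_pos)
    have "X0 \<le> a11* Y/a21" unfolding X0_def by simp
    then have "a11* Y \<le> a21* X0" using a21 by (simp add: field_simps)
    then have V: "V \<le> 0" unfolding V_def using d by (simp add: divide_nonpos_pos)
    have Ud: "U* d = a22* X0 - a12* Y" unfolding U_def using d by simp
    have Vd: "V* d = -a21* X0 + a11* Y" unfolding V_def using d by simp
    have "(a11* U + a12* V)* d = X0* d"
      by (simp only: distrib_right mult.assoc Ud Vd) (simp add: d_def algebra_simps)
    then have "a11* U + a12* V = X0" using d by simp
    then have "a11* U + a12* V + k* max U 0 = X0" using U by simp
    moreover have "(a21* U + a22* V)* d = Y* d"
      by (simp only: distrib_right mult.assoc Ud Vd) (simp add: d_def algebra_simps)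
    then have "a21* U + a22* V = Y" using d by simp
    then have "a21* U + a22* V + k* max V 0 = Y" using V by simp
    ultimately have "X0 \<in> Tset a11 a12 a21 a22 k Y" unfolding Tset_def by blast
    then show ?thesis unfolding X0_def by (intro exI[of _ X0]) (simp add: X0_def)
  qed
  then show ?thesis using Tset_up[OF a] by blast
qed

lemma up_closed_form:
  fixes T :: "real set"
  assumes "closed T" "T \<noteq> {}" "\<And>x y. x \<in> T \<Longrightarrow> x \<le> y \<Longrightarrow> y \<in> T"
  shows "\<exists>e::ereal. e < \<infinity> \<and> (\<forall>x. x \<in> T \<longleftrightarrow> e \<le> ereal x)"
proof (cases "bdd_below T")
  case True
  have I: "Inf T \<in> T" using closed_contains_Inf[OF assms(2) True assms(1)] .
  show ?thesis
  proof (intro exI[of _ "ereal (Inf T)"] conjI allI)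
    fix x show "x \<in> T \<longleftrightarrow> ereal (Inf T) \<le> ereal x"
      using cInf_lower[OF _ True] assms(3)[OF I] by auto
  qed simp
next
  case False
  show ?thesis
  proof (intro exI[of _ "-\<infinity>"] conjI allI)
    fix x
    obtain y where "y \<in> T" "y < x" using False unfolding bdd_below_def
      by (meson not_le)
    then show "x \<in> T \<longleftrightarrow> -\<infinity> \<le> ereal x" using assms(3) by auto
  qed simp
qed


lemma reduce:
  fixes beta sigma lambda mu psi p q M Mf N e1 e2 :: real
  assumes lam: "lambda > 0"
  defines "a \<equiv> Mf * beta"
  defines "L11 \<equiv> ((1 - M * p) * (1 - a * p) + M * (1 - p) * a * (1 - q)) / lambda - sigma * N * p"
    and "L12 \<equiv> - (1 - p) * (a * (1 - M * p) + M * (1 - a * q) + lambda * sigma * N) / lambda"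
    and "L21 \<equiv> - (1 - q) * (a * (1 - M * q) + M * (1 - a * p) + lambda * sigma * N) / lambda"
    and "L22 \<equiv> ((1 - M * q) * (1 - a * q) + M * (1 - q) * a * (1 - p)) / lambda - sigma * N * q"
  shows "BRE_exists beta sigma lambda mu psi p q M Mf N e1 e2 \<longleftrightarrow>
    (\<exists>u v. L11 * u + L12 * v + sigma * max (psi * u) (- mu) = e1 \<and> L21 * u + L22 * v + sigma * max (psi * v) (- mu) = e2)"
proof
  assume "BRE_exists beta sigma lambda mu psi p q M Mf N e1 e2"
  then obtain x1 pi1 x2 pi2 where B: "is_BRE beta sigma lambda mu psi p q M Mf N e1 e2 x1 pi1 x2 pi2"
    unfolding BRE_exists_def by blast
  define i1 where "i1 = max (psi * pi1) (- mu)"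
  define i2 where "i2 = max (psi * pi2) (- mu)"
  have E: "x1 = M * (p * x1 + (1 - p) * x2) - sigma * (i1 - N * (p * pi1 + (1 - p) * pi2)) + e1"
    "pi1 = lambda * x1 + a * (p * pi1 + (1 - p) * pi2)"
    "x2 = M * ((1 - q) * x1 + q * x2) - sigma * (i2 - N * ((1 - q) * pi1 + q * pi2)) + e2"
    "pi2 = lambda * x2 + a * ((1 - q) * pi1 + q * pi2)"
    using B unfolding is_BRE_def irate_def Let_def i1_def i2_def a_def by (auto simp: mult.assoc)
  have x1: "x1 = (pi1 - a * (p * pi1 + (1 - p) * pi2)) / lambda" using E(2) lam by (simp add: field_simps)
  have x2: "x2 = (pi2 - a * ((1 - q) * pi1 + q * pi2)) / lambda" using E(4) lam by (simp add: field_simps)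
  have e1: "e1 = x1 - M * (p * x1 + (1 - p) * x2) + sigma * (i1 - N * (p * pi1 + (1 - p) * pi2))"
    using E(1) by linarith
  have e2: "e2 = x2 - M * ((1 - q) * x1 + q * x2) + sigma * (i2 - N * ((1 - q) * pi1 + q * pi2))"
    using E(3) by linarith
  have "L11 * pi1 + L12 * pi2 + sigma * i1 = e1"
    unfolding e1 L11_def L12_def x1 x2 using lam by (simp add: field_simps; simp add: algebra_simps)
  moreover have "L21 * pi1 + L22 * pi2 + sigma * i2 = e2"
    unfolding e2 L21_def L22_def x1 x2 using lam by (simp add: field_simps; simp add: algebra_simps)
  ultimately show "\<exists>u v. L11 * u + L12 * v + sigma * max (psi * u) (- mu) = e1 \<and> L21 * u + L22 * v + sigma * max (psi * v) (- mu) = e2"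
    unfolding i1_def i2_def by blast
next
  assume "\<exists>u v. L11 * u + L12 * v + sigma * max (psi * u) (- mu) = e1 \<and> L21 * u + L22 * v + sigma * max (psi * v) (- mu) = e2"
  then obtain pi1 pi2 where G: "L11 * pi1 + L12 * pi2 + sigma * max (psi * pi1) (- mu) = e1"
     "L21 * pi1 + L22 * pi2 + sigma * max (psi * pi2) (- mu) = e2" by blast
  define i1 where "i1 = max (psi * pi1) (- mu)"
  define i2 where "i2 = max (psi * pi2) (- mu)"
  define x1 where "x1 = (pi1 - a * (p * pi1 + (1 - p) * pi2)) / lambda"
  define x2 where "x2 = (pi2 - a * ((1 - q) * pi1 + q * pi2)) / lambda"
  have G': "e1 = L11 * pi1 + L12 * pi2 + sigma * i1" "e2 = L21 * pi1 + L22 * pi2 + sigma * i2"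
    using G unfolding i1_def i2_def by auto
  have "x1 = M * (p * x1 + (1 - p) * x2) - sigma * (i1 - N * (p * pi1 + (1 - p) * pi2)) + e1"
    unfolding G'(1) L11_def L12_def x1_def x2_def using lam by (simp add: field_simps; simp add: algebra_simps)
  moreover have "pi1 = lambda * x1 + a * (p * pi1 + (1 - p) * pi2)"
    unfolding x1_def using lam by simp
  moreover have "x2 = M * ((1 - q) * x1 + q * x2) - sigma * (i2 - N * ((1 - q) * pi1 + q * pi2)) + e2"
    unfolding G'(2) L21_def L22_def x1_def x2_def using lam by (simp add: field_simps; simp add: algebra_simps)
  moreover have "pi2 = lambda * x2 + a * ((1 - q) * pi1 + q * pi2)"
    unfolding x2_def using lam by simp
  ultimately have "is_BRE beta sigma lambda mu psi p q M Mf N e1 e2 x1 pi1 x2 pi2"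
    unfolding is_BRE_def irate_def Let_def i1_def i2_def a_def by (auto simp: mult.assoc)
  then show "BRE_exists beta sigma lambda mu psi p q M Mf N e1 e2" unfolding BRE_exists_def by blast
qed


theorem proposition4:
  fixes beta sigma lambda mu psi p q M Mf N eps2 :: real
  assumes "0 < beta" "beta < 1" "0 < sigma" "0 < lambda" "0 < mu" "1 < psi"
    and "0 < p" "p \<le> 1" "0 < q" "q \<le> 1"
    and "0 < M" "M \<le> 1" "0 < Mf" "Mf \<le> 1" "0 < N" "N \<le> 1"
    and "min M (min Mf N) < 1"
    and "0 \<le> eps2"
  shows "(\<exists>eps_bar :: ereal. eps_bar < \<infinity> \<and>
            (\<forall>eps1 :: real. BRE_exists beta sigma lambda mu psi p q M Mf N eps1 eps2
                              \<longleftrightarrow> eps_bar \<le> ereal eps1))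
       \<and> ((M - 1) * (1 - Mf * beta) + lambda * sigma * N < 0 \<longrightarrow>
            (\<forall>eps1 :: real. BRE_exists beta sigma lambda mu psi p q M Mf N eps1 eps2))"
proof -
  define a where "a = Mf * beta"
  define L11 where "L11 = ((1 - M * p) * (1 - a * p) + M * (1 - p) * a * (1 - q)) / lambda - sigma * N * p"
  define L12 where "L12 = - (1 - p) * (a * (1 - M * p) + M * (1 - a * q) + lambda * sigma * N) / lambda"
  define L21 where "L21 = - (1 - q) * (a * (1 - M * q) + M * (1 - a * p) + lambda * sigma * N) / lambda"
  define L22 where "L22 = ((1 - M * q) * (1 - a * q) + M * (1 - q) * a * (1 - p)) / lambda - sigma * N * q"
  define l where "l = (1 - M) * (1 - a) / lambda - sigma * N"
  have lam: "lambda > 0" using assms by simp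
  have a01: "0 < a" "a < 1" unfolding a_def using assms
    by (simp, metis less_eq_real_def mult_le_one mult_less_cancel_right1 mult_pos_pos order_less_le_trans)
  have s1: "L11 + L12 = l" unfolding L11_def L12_def l_def using lam
    by (simp add: field_simps; simp add: algebra_simps)
  have s2: "L21 + L22 = l" unfolding L21_def L22_def l_def using lam
    by (simp add: field_simps; simp add: algebra_simps)
  have prods: "M * p \<le> 1" "M * q \<le> 1" "a * p \<le> 1" "a * q \<le> 1"
    using assms a01 by (auto intro!: mult_le_one)
  have "0 \<le> (1 - p) * (a * (1 - M * p) + M * (1 - a * q) + lambda * sigma * N)"
    using assms a01 prods by (intro mult_nonneg_nonneg add_nonneg_nonneg) auto
  then have "0 \<le> (1 - p) * (a * (1 - M * p) + M * (1 - a * q) + lambda * sigma * N) / lambda" using lam by simp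
  moreover have "L12 = - ((1 - p) * (a * (1 - M * p) + M * (1 - a * q) + lambda * sigma * N) / lambda)"
    unfolding L12_def by (simp only: minus_mult_left divide_minus_left)
  ultimately have n12: "L12 \<le> 0" by linarith
  have "0 \<le> (1 - q) * (a * (1 - M * q) + M * (1 - a * p) + lambda * sigma * N)"
    using assms a01 prods by (intro mult_nonneg_nonneg add_nonneg_nonneg) auto
  then have "0 \<le> (1 - q) * (a * (1 - M * q) + M * (1 - a * p) + lambda * sigma * N) / lambda" using lam by simp
  moreover have "L21 = - ((1 - q) * (a * (1 - M * q) + M * (1 - a * p) + lambda * sigma * N) / lambda)"
    unfolding L21_def by (simp only: minus_mult_left divide_minus_left)
  ultimately have n21: "L21 \<le> 0" by linarith
  have "(1 - M) * (1 - a) / lambda \<ge> 0" using assms a01 lam by simp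
  moreover have "sigma * N < sigma * psi" using assms by simp
  ultimately have lk: "l + sigma * psi > 0" unfolding l_def by linarith
  define kap where "kap = sigma * psi"
  have kap: "kap > 0" unfolding kap_def using assms by simp
  define k where "k = mu / psi * l + sigma * mu"
  have k_eq: "k = mu / psi * (l + sigma * psi)" unfolding k_def using assms by (simp add: field_simps)
  have k: "k > 0" unfolding k_eq using lk assms by simp
  have kk1: "k = mu / psi * L11 + mu / psi * L12 + sigma * mu" unfolding k_def s1[symmetric] by (simp add: algebra_simps add_divide_distrib)
  have kk2: "k = mu / psi * L21 + mu / psi * L22 + sigma * mu" unfolding k_def s2[symmetric] by (simp add: algebra_simps add_divide_distrib)
  have X: "A * (U - c) + B * (V - c) + sigma * (psi * m - mu) = A * U + B * V + sigma * psi * m - (c * A + c * B + sigma * mu)"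
    for A B U V m c :: real by (simp add: algebra_simps)
  define T where "T = Tset L11 L12 L21 L22 kap (eps2 + k)"
  have hyp: "L12 \<le> 0" "L21 \<le> 0" "L11 + L12 + kap > 0" "L21 + L22 + kap > 0" "eps2 + k \<ge> 0" "kap > 0"
    using n12 n21 s1 s2 lk k kap assms unfolding kap_def by auto
  have mx: "max (psi * (U - mu / psi)) (- mu) = psi * max U 0 - mu" for U
  proof -
    have e: "psi * (U - mu / psi) = psi * U - mu" using assms by (simp add: field_simps)
    show ?thesis
    proof (cases "U \<ge> 0")
      case True
      then have "psi * U \<ge> 0" using assms by simp
      then show ?thesis unfolding e using True by simp
    next
      case False
      then have "psi * U < 0" using assms by (simp add: mult_pos_neg)
      then show ?thesis unfolding e using False by simp
    qed
  qed
  have key: "BRE_exists beta sigma lambda mu psi p q M Mf N e1 eps2 \<longleftrightarrow> e1 + k \<in> T" for e1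
  proof -
    have "BRE_exists beta sigma lambda mu psi p q M Mf N e1 eps2 \<longleftrightarrow>
      (\<exists>u v. L11 * u + L12 * v + sigma * max (psi * u) (- mu) = e1 \<and> L21 * u + L22 * v + sigma * max (psi * v) (- mu) = eps2)"
      unfolding L11_def L12_def L21_def L22_def a_def by (rule reduce[OF lam])
    also have "\<dots> \<longleftrightarrow> e1 + k \<in> T"
    proof
      assume "\<exists>u v. L11 * u + L12 * v + sigma * max (psi * u) (- mu) = e1 \<and> L21 * u + L22 * v + sigma * max (psi * v) (- mu) = eps2"
      then obtain u v where g: "L11 * u + L12 * v + sigma * max (psi * u) (- mu) = e1"
        "L21 * u + L22 * v + sigma * max (psi * v) (- mu) = eps2" by blast
      define U where "U = u + mu / psi"
      define V where "V = v + mu / psi"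
      have uv: "u = U - mu / psi" "v = V - mu / psi" unfolding U_def V_def by simp_all
      have "L11 * U + L12 * V + kap * max U 0 = e1 + k"
        using g(1) unfolding uv mx X kap_def kk1 by (simp only: mult.assoc; linarith)
      moreover have "L21 * U + L22 * V + kap * max V 0 = eps2 + k"
        using g(2) unfolding uv mx X kap_def kk2 by (simp only: mult.assoc; linarith)
      ultimately show "e1 + k \<in> T" unfolding T_def Tset_def by blast
    next
      assume "e1 + k \<in> T"
      then obtain U V where h: "L11 * U + L12 * V + kap * max U 0 = e1 + k"
        "L21 * U + L22 * V + kap * max V 0 = eps2 + k" unfolding T_def Tset_def by blast
      have "L11 * (U - mu / psi) + L12 * (V - mu / psi) + sigma * max (psi * (U - mu / psi)) (- mu) = e1"
        using h(1) unfolding mx X kap_def kk1 by (simp only: mult.assoc; linarith)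
      moreover have "L21 * (U - mu / psi) + L22 * (V - mu / psi) + sigma * max (psi * (V - mu / psi)) (- mu) = eps2"
        using h(2) unfolding mx X kap_def kk2 by (simp only: mult.assoc; linarith)
      ultimately show "\<exists>u v. L11 * u + L12 * v + sigma * max (psi * u) (- mu) = e1 \<and> L21 * u + L22 * v + sigma * max (psi * v) (- mu) = eps2"
        by blast
    qed
    finally show ?thesis .
  qed
  define S where "S = {e1. BRE_exists beta sigma lambda mu psi p q M Mf N e1 eps2}"
  have S_eq: "S = (\<lambda>e. e + k) -` T" unfolding S_def using key by auto
  have cS: "closed S" unfolding S_eq T_def
    by (rule continuous_closed_vimage[OF Tset_closed[OF kap]]) (intro continuous_intros)
  have "0 \<in> T" unfolding T_def using Tset_nonneg[OF hyp(1-5)] by simp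
  then have "-k \<in> S" unfolding S_eq by simp
  then have neS: "S \<noteq> {}" by blast
  have upS: "y \<in> S" if "x \<in> S" "x \<le> y" for x y
  proof -
    have "x + k \<in> T" using that(1) unfolding S_eq by simp
    then have "y + k \<in> T" unfolding T_def by (rule Tset_up[OF hyp]) (use that(2) in simp)
    then show ?thesis unfolding S_eq by simp
  qed
  obtain e where e: "e < \<infinity>" "\<forall>x. x \<in> S \<longleftrightarrow> e \<le> ereal x"
    using up_closed_form[OF cS neS] upS by blast
  have part1: "\<exists>eps_bar :: ereal. eps_bar < \<infinity> \<and>
            (\<forall>eps1 :: real. BRE_exists beta sigma lambda mu psi p q M Mf N eps1 eps2
                              \<longleftrightarrow> eps_bar \<le> ereal eps1)"
  proof -
    have "\<forall>eps1. BRE_exists beta sigma lambda mu psi p q M Mf N eps1 eps2 \<longleftrightarrow> e \<le> ereal eps1"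
      using e(2) unfolding S_def by simp
    then show ?thesis using e(1) by blast
  qed
  have part2: "BRE_exists beta sigma lambda mu psi p q M Mf N eps1 eps2"
    if c: "(M - 1) * (1 - Mf * beta) + lambda * sigma * N < 0" for eps1
  proof -
    have "(1 - M) * (1 - a) - lambda * sigma * N > 0" using c unfolding a_def by (simp add: algebra_simps)
    then have "((1 - M) * (1 - a) - lambda * sigma * N) / lambda > 0" using lam by simp
    moreover have "((1 - M) * (1 - a) - lambda * sigma * N) / lambda = (1 - M) * (1 - a) / lambda - sigma * N"
      using lam by (simp add: diff_divide_distrib)
    ultimately have "(1 - M) * (1 - a) / lambda - sigma * N > 0" by simp
    then have lp: "l > 0" unfolding l_def .
    have "eps1 + k \<in> T" unfolding T_def
      by (rule Tset_all[OF hyp]) (use s1 s2 lp in auto)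
    then show ?thesis using key by simp
  qed
  show ?thesis using part1 part2 by blast
qed

end
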